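(* Let $H \subset L$ be light-cone regular, let $h_0$ be a minimal element of $H$ with respect to $\le$, and let $H' = H \setminus \{h_0\}$. Then the initial boundaries satisfy $H'_0 = (H_0 \setminus \{h_0\}) \cup \{h_0 - v_N\}$.
   Context: Let $L$ be a finitely generated $\mathbb{Z}$-module and $v_1,\dots,v_N\in L$ distinct elements linearly independent over $\mathbb{Z}_{\ge 0}$ (i.e. $\sum_i a_i v_i=0$ with all $a_i\in\mathbb{Z}_{\ge0}$ forces all $a_i=0$). Let $S=\{\sum_i a_iv_i : a_i\in\mathbb{Z}_{\ge0}\}$ and define the partial order $h_1\le h_2$ iff $h_1-h_2\in S$. Assume $v_N$ is the minimum of $\{0,v_1,\dots,v_N\}$ with respect to $\le$. A nonempty subset $H\subset L$ is light-cone regular if for every $h\in H$ the set $\{h'\in H: h'\le h\}$ is finite and $\{h'\in L: h'\ge h\}\subset H$. The initial boundary of a light-cone regular $H$ is $H_0=\{h\in H:\ h+v_i\notin H\text{ for some }i\}$. (For minimal $h_0$, the set $H\setminus\{h_0\}$ is again light-cone regular, so $H'_0$ is defined.) *)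

theory Defs
  imports Main
begin

primrec nsmul :: "nat \<Rightarrow> 'a::ab_group_add \<Rightarrow> 'a" where
  "nsmul 0 x = 0"
| "nsmul (Suc n) x = x + nsmul n x"

inductive_set zspan :: "'a::ab_group_add set \<Rightarrow> 'a set" for G where
  zero: "0 \<in> zspan G"
| gen: "g \<in> G \<Longrightarrow> g \<in> zspan G"
| diff: "x \<in> zspan G \<Longrightarrow> y \<in> zspan G \<Longrightarrow> x - y \<in> zspan G"

definition fin_gen_Z_module :: "'a::ab_group_add itself \<Rightarrow> bool" where
  "fin_gen_Z_module _ \<longleftrightarrow> (\<exists>G::'a set. finite G \<and> zspan G = UNIV)"

definition nonneg_indep :: "(nat \<Rightarrow> 'a::ab_group_add) \<Rightarrow> nat \<Rightarrow> bool" where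
  "nonneg_indep v N \<longleftrightarrow>
     (\<forall>a::nat \<Rightarrow> nat. (\<Sum>i\<in>{1..N}. nsmul (a i) (v i)) = 0 \<longrightarrow> (\<forall>i\<in>{1..N}. a i = 0))"

definition cone :: "(nat \<Rightarrow> 'a::ab_group_add) \<Rightarrow> nat \<Rightarrow> 'a set" where
  "cone v N = {\<Sum>i\<in>{1..N}. nsmul (a i) (v i) | a. True}"

definition cone_le :: "(nat \<Rightarrow> 'a::ab_group_add) \<Rightarrow> nat \<Rightarrow> 'a \<Rightarrow> 'a \<Rightarrow> bool" where
  "cone_le v N h1 h2 \<longleftrightarrow> h1 - h2 \<in> cone v N"

definition light_cone_regular :: "(nat \<Rightarrow> 'a::ab_group_add) \<Rightarrow> nat \<Rightarrow> 'a set \<Rightarrow> bool" where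
  "light_cone_regular v N H \<longleftrightarrow> H \<noteq> {} \<and>
     (\<forall>h\<in>H. finite {h'\<in>H. cone_le v N h' h} \<and> {h'. cone_le v N h h'} \<subseteq> H)"

definition initial_boundary :: "(nat \<Rightarrow> 'a::ab_group_add) \<Rightarrow> nat \<Rightarrow> 'a set \<Rightarrow> 'a set" where
  "initial_boundary v N H = {h\<in>H. \<exists>i\<in>{1..N}. h + v i \<notin> H}"

end

theory Submission
  imports Defs
begin

lemma vN_in_cone:
  assumes "N \<ge> 1"
  shows "v N \<in> cone v N"
proof -
  let ?a = "\<lambda>i::nat. if i = N then 1 else (0::nat)"
  have "(\<Sum>i\<in>{1..N}. nsmul (?a i) (v i)) = (\<Sum>i\<in>{1..N}. if i = N then v i else 0)"
    by (rule sum.cong) auto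
  also have "\<dots> = v N" using assms by (simp add: sum.delta)
  finally have "v N = (\<Sum>i\<in>{1..N}. nsmul (?a i) (v i))" by simp
  then show ?thesis unfolding cone_def mem_Collect_eq by (intro exI[where x="?a"]) simp
qed

lemma vN_nonzero:
  assumes "N \<ge> 1" "nonneg_indep v N"
  shows "v N \<noteq> 0"
proof
  assume z: "v N = 0"
  let ?a = "\<lambda>i::nat. if i = N then 1 else (0::nat)"
  have "(\<Sum>i\<in>{1..N}. nsmul (?a i) (v i)) = (\<Sum>i\<in>{1..N}. if i = N then v i else 0)"
    by (rule sum.cong) auto
  also have "\<dots> = 0" using assms z by (simp add: sum.delta)
  finally have s0: "(\<Sum>i\<in>{1..N}. nsmul (?a i) (v i)) = 0" .
  have "\<forall>i\<in>{1..N}. ?a i = 0" using assms(2) s0 unfolding nonneg_indep_def by (elim allE[where x="?a"]) simp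
  then show False using assms(1) by (metis atLeastAtMost_iff le_refl one_neq_zero)
qed

theorem lemma3p11:
  fixes v :: "nat \<Rightarrow> 'a::ab_group_add" and N :: nat and H :: "'a set" and h0 :: 'a
  assumes fg: "fin_gen_Z_module TYPE('a)"
    and N: "N \<ge> 1"
    and dist: "inj_on v {1..N}"
    and indep: "nonneg_indep v N"
    and vN_min: "\<forall>x\<in>insert 0 (v ` {1..N}). cone_le v N (v N) x"
    and reg: "light_cone_regular v N H"
    and h0: "h0 \<in> H" "\<forall>h\<in>H. cone_le v N h h0 \<longrightarrow> h = h0"
  shows "initial_boundary v N (H - {h0}) =
           (initial_boundary v N H - {h0}) \<union> {h0 - v N}"
proof -
  have up: "{h'. cone_le v N h0 h'} \<subseteq> H" using reg h0(1) unfolding light_cone_regular_def by blast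
  have vc: "v N \<in> cone v N" using vN_in_cone N by blast
  have nz: "v N \<noteq> 0" using vN_nonzero N indep by blast
  have a: "h0 - v N \<in> H" using up vc unfolding cone_le_def by auto
  have b: "h0 - v N \<noteq> h0" using nz by simp
  have Nin: "N \<in> {1..N}" using N by simp
  have c: "h0 - v N \<in> initial_boundary v N (H - {h0})"
    unfolding initial_boundary_def using a b Nin by (auto intro!: bexI[of _ N])
  show ?thesis
  proof (rule set_eqI, rule iffI)
    fix h assume "h \<in> initial_boundary v N (H - {h0})"
    then obtain i where hH: "h \<in> H" "h \<noteq> h0" and i: "i \<in> {1..N}" "h + v i \<notin> H - {h0}"
      unfolding initial_boundary_def by blast
    show "h \<in> (initial_boundary v N H - {h0}) \<union> {h0 - v N}"
    proof (cases "h + v i \<in> H")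
      case False then show ?thesis using hH i unfolding initial_boundary_def by blast
    next
      case True
      then have e: "h + v i = h0" using i by blast
      show ?thesis
      proof (cases "i = N")
        case True then show ?thesis using e by (auto simp: algebra_simps)
      next
        case False
        have ne: "v N \<noteq> v i" using dist False i Nin by (metis inj_on_contraD)
        have s: "v N - v i \<in> cone v N" using vN_min i unfolding cone_le_def by auto
        have "h + v N \<notin> H"
        proof
          assume "h + v N \<in> H"
          moreover have "h + v N = h0 + (v N - v i)" using e by (auto simp: algebra_simps)
          moreover have "cone_le v N (h0 + (v N - v i)) h0" using s unfolding cone_le_def by simp
          ultimately have "h0 + (v N - v i) = h0" using h0(2) by metis
          then show False using ne by simp
        qed
        then show ?thesis using hH Nin unfolding initial_boundary_def by blast
      qed
    qed
  next
    fix h assume "h \<in> (initial_boundary v N H - {h0}) \<union> {h0 - v N}"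
    then show "h \<in> initial_boundary v N (H - {h0})"
      using c unfolding initial_boundary_def by auto
  qed
qed

end
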